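(* For every $0\le i\le s$, the subspace $\mathfrak{n}_i=\mathrm{span}\{y_\eta:\eta\in A_i\}$ is a Lie subalgebra of $\mathfrak{n}$, and consequently $\mathcal{L}_i=\mathfrak{n}_i/\mathfrak{m}$ is a Lie subalgebra of $\mathcal{L}=\mathfrak{n}/\mathfrak{m}$.
   Context: $K$ is a field of characteristic zero, $n\ge 2$, $\mathfrak{n}$ is the Lie algebra of strictly lower triangular $n\times n$ matrices over $K$, $A=\{(i,j): n\ge i>j\ge 1\}$, $y_{ij}=E_{ij}$ (matrix units), $y_\xi=y_{ij}$ for $\xi=(i,j)$. $M\subset A$ is such that $\mathfrak{m}=\mathrm{span}\{y_\xi:\xi\in M\}$ is an ideal of $\mathfrak{n}$. Order on $A$: $(i,j)\succ(i',j')$ iff $j<j'$, or $j=j'$ and $i>i'$. Diagram construction: Step 0: fill the places of $M$ with $\bullet$. Step $i\ge1$ (while unfilled places of $A$ remain): put $\otimes$ on the $\succ$-greatest unfilled place $(k,t)$, call it $\xi_i$; then for each $a$ with $t<a<k$ such that both $(k,a)$ and $(a,t)$ are unfilled, put $-$ on $(k,a)$ and $+$ on $(a,t)$ (if one of them is already filled, leave the other unchanged). $s$ is the total number of steps with $\otimes$. $B_i$ is the set of places of $A$ still unfilled after step $i$ (so $B_0=A\setminus M$, $B_s=\emptyset$), and $A_i=B_i\sqcup M$. *)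

theory Defs
  imports Main
begin

text \<open>Matrices over K are represented as functions nat => nat => K; the n x n
matrices used are those with entries indexed by 1..n (all spans below consist of
such matrices). Places are pairs (i,j).\<close>

type_synonym 'a mat_fn = "nat \<Rightarrow> nat \<Rightarrow> 'a"

definition places :: "nat \<Rightarrow> (nat \<times> nat) set" where
  "places n = {(i, j). j \<ge> 1 \<and> j < i \<and> i \<le> n}"

definition munit :: "nat \<times> nat \<Rightarrow> 'a::field mat_fn" where
  "munit \<xi> = (\<lambda>a b. if (a, b) = \<xi> then 1 else 0)"

definition madd :: "'a::field mat_fn \<Rightarrow> 'a mat_fn \<Rightarrow> 'a mat_fn" where
  "madd X Y = (\<lambda>a b. X a b + Y a b)"

definition msub :: "'a::field mat_fn \<Rightarrow> 'a mat_fn \<Rightarrow> 'a mat_fn" where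
  "msub X Y = (\<lambda>a b. X a b - Y a b)"

definition msmult :: "'a::field \<Rightarrow> 'a mat_fn \<Rightarrow> 'a mat_fn" where
  "msmult c X = (\<lambda>a b. c * X a b)"

definition mmult :: "nat \<Rightarrow> 'a::field mat_fn \<Rightarrow> 'a mat_fn \<Rightarrow> 'a mat_fn" where
  "mmult n X Y = (\<lambda>a b. \<Sum>c\<in>{1..n}. X a c * Y c b)"

definition lie_bracket :: "nat \<Rightarrow> 'a::field mat_fn \<Rightarrow> 'a mat_fn \<Rightarrow> 'a mat_fn" where
  "lie_bracket n X Y = msub (mmult n X Y) (mmult n Y X)"

definition unit_span :: "(nat \<times> nat) set \<Rightarrow> 'a::field mat_fn set" where
  "unit_span S = {(\<lambda>a b. \<Sum>\<xi>\<in>S. c \<xi> * munit \<xi> a b) | c. True}"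

definition is_lie_subalgebra :: "nat \<Rightarrow> 'a::field mat_fn set \<Rightarrow> 'a mat_fn set \<Rightarrow> bool" where
  "is_lie_subalgebra n L N \<longleftrightarrow> L \<subseteq> N \<and> (\<lambda>a b. 0) \<in> L \<and>
     (\<forall>X\<in>L. \<forall>Y\<in>L. madd X Y \<in> L) \<and> (\<forall>c. \<forall>X\<in>L. msmult c X \<in> L) \<and>
     (\<forall>X\<in>L. \<forall>Y\<in>L. lie_bracket n X Y \<in> L)"

definition is_lie_ideal :: "nat \<Rightarrow> 'a::field mat_fn set \<Rightarrow> 'a mat_fn set \<Rightarrow> bool" where
  "is_lie_ideal n I N \<longleftrightarrow> I \<subseteq> N \<and> (\<lambda>a b. 0) \<in> I \<and>
     (\<forall>X\<in>I. \<forall>Y\<in>I. madd X Y \<in> I) \<and> (\<forall>c. \<forall>X\<in>I. msmult c X \<in> I) \<and>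
     (\<forall>X\<in>N. \<forall>Y\<in>I. lie_bracket n X Y \<in> I)"

definition succ_pl :: "nat \<times> nat \<Rightarrow> nat \<times> nat \<Rightarrow> bool" where
  "succ_pl \<xi> \<eta> \<longleftrightarrow> snd \<xi> < snd \<eta> \<or> (snd \<xi> = snd \<eta> \<and> fst \<xi> > fst \<eta>)"

definition greatest_pl :: "(nat \<times> nat) set \<Rightarrow> nat \<times> nat" where
  "greatest_pl U = (THE \<xi>. \<xi> \<in> U \<and> (\<forall>\<eta>\<in>U. \<eta> \<noteq> \<xi> \<longrightarrow> succ_pl \<xi> \<eta>))"

text \<open>One step of the diagram construction acting on the set U of unfilled
places: put the cross on xi = (k,t) = greatest unfilled place, and for every
a with t < a < k such that both (k,a) and (a,t) are unfilled, fill both.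
(The pairs for different a are disjoint, so processing them simultaneously
agrees with processing them one by one.)\<close>
definition diagram_step :: "(nat \<times> nat) set \<Rightarrow> (nat \<times> nat) set" where
  "diagram_step U =
     (if U = {} then {} else
      (let (k, t) = greatest_pl U;
           P = {a. t < a \<and> a < k \<and> (k, a) \<in> U \<and> (a, t) \<in> U}
       in U - {(k, t)} - {(k, a) | a. a \<in> P} - {(a, t) | a. a \<in> P}))"

text \<open>B_i: places still unfilled after step i (B_0 = A - M).\<close>
definition Bset :: "nat \<Rightarrow> (nat \<times> nat) set \<Rightarrow> nat \<Rightarrow> (nat \<times> nat) set" where
  "Bset n M i = (diagram_step ^^ i) (places n - M)"

definition Aset :: "nat \<Rightarrow> (nat \<times> nat) set \<Rightarrow> nat \<Rightarrow> (nat \<times> nat) set" where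
  "Aset n M i = Bset n M i \<union> M"

definition num_steps :: "nat \<Rightarrow> (nat \<times> nat) set \<Rightarrow> nat" where
  "num_steps n M = (LEAST i. Bset n M i = {})"

end

theory Submission
  imports Defs
begin

lemma span_char:
  assumes "finite S"
  shows "(unit_span S :: 'a::field mat_fn set) = {X. \<forall>a b. (a,b) \<notin> S \<longrightarrow> X a b = 0}"
proof (intro set_eqI iffI)
  fix X :: "'a mat_fn" assume "X \<in> unit_span S"
  then obtain c where X: "X = (\<lambda>a b. \<Sum>\<xi>\<in>S. c \<xi> * munit \<xi> a b)" by (auto simp: unit_span_def)
  show "X \<in> {X. \<forall>a b. (a,b) \<notin> S \<longrightarrow> X a b = 0}"
    unfolding X munit_def by (auto intro!: sum.neutral)
next
  fix X :: "'a mat_fn" assume "X \<in> {X. \<forall>a b. (a,b) \<notin> S \<longrightarrow> X a b = 0}"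
  hence z: "\<And>a b. (a,b) \<notin> S \<Longrightarrow> X a b = 0" by auto
  have "X = (\<lambda>a b. \<Sum>\<xi>\<in>S. (\<lambda>\<xi>. X (fst \<xi>) (snd \<xi>)) \<xi> * munit \<xi> a b)"
  proof (intro ext)
    fix a b
    have "(\<Sum>\<xi>\<in>S. X (fst \<xi>) (snd \<xi>) * munit \<xi> a b) = (\<Sum>\<xi>\<in>S. if \<xi> = (a,b) then X (fst \<xi>) (snd \<xi>) else 0)"
      by (rule sum.cong) (auto simp: munit_def)
    also have "\<dots> = (if (a,b) \<in> S then X a b else 0)" using assms by (simp add: sum.delta')
    also have "\<dots> = X a b" using z by auto
    finally show "X a b = (\<Sum>\<xi>\<in>S. X (fst \<xi>) (snd \<xi>) * munit \<xi> a b)" by simp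
  qed
  thus "X \<in> unit_span S" unfolding unit_span_def by (intro CollectI exI[of _ "\<lambda>\<xi>. X (fst \<xi>) (snd \<xi>)"]) simp
qed

definition closed_pl :: "(nat \<times> nat) set \<Rightarrow> bool" where
  "closed_pl S \<longleftrightarrow> (\<forall>p q r. (p,q) \<in> S \<longrightarrow> (q,r) \<in> S \<longrightarrow> (p,r) \<in> S)"

lemma finite_places: "finite (places n)"
proof -
  have "places n \<subseteq> {0..n} \<times> {0..n}" by (auto simp: places_def)
  thus ?thesis by (rule finite_subset) auto
qed

lemma munit_in: "finite S \<Longrightarrow> \<xi> \<in> S \<Longrightarrow> (munit \<xi> :: 'a::field mat_fn) \<in> unit_span S"
  by (auto simp: span_char munit_def)

lemma mmult_units:
  assumes "a \<in> {1..n}"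
  shows "mmult n (munit (k,a)) (munit (a,t)) k t = (1::'a::field)"
proof -
  have "mmult n (munit (k,a)) (munit (a,t)) k t = (\<Sum>c\<in>{1..n}. if c = a then (1::'a) else 0)"
    unfolding mmult_def by (rule sum.cong) (auto simp: munit_def)
  also have "\<dots> = 1" using assms by (simp add: sum.delta)
  finally show ?thesis .
qed

lemma mmult_units0:
  assumes "k \<noteq> a"
  shows "mmult n (munit (a,t)) (munit (k,a)) k t = (0::'a::field)"
  unfolding mmult_def munit_def using assms by (auto intro!: sum.neutral)

lemma ideal_props:
  assumes M: "M \<subseteq> places n"
    and I: "is_lie_ideal n (unit_span M :: 'a::field mat_fn set) (unit_span (places n))"
  shows "\<And>k a t. (k,a) \<in> places n \<Longrightarrow> (a,t) \<in> M \<Longrightarrow> (k,t) \<in> M"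
    and "\<And>k a t. (k,a) \<in> M \<Longrightarrow> (a,t) \<in> places n \<Longrightarrow> (k,t) \<in> M"
proof -
  have fM: "finite M" using M finite_places finite_subset by blast
  fix k a t assume 1: "(k,a) \<in> places n" and 2: "(a,t) \<in> M"
  have "lie_bracket n (munit (k,a)) (munit (a,t)) \<in> (unit_span M :: 'a mat_fn set)"
    using I munit_in[OF finite_places 1] munit_in[OF fM 2] unfolding is_lie_ideal_def by blast
  moreover have "lie_bracket n (munit (k,a)) (munit (a,t)) k t = (1::'a)"
  proof -
    have "a \<in> {1..n}" "k \<noteq> a" using 1 by (auto simp: places_def)
    hence "mmult n (munit (k,a)) (munit (a,t)) k t = (1::'a)" "mmult n (munit (a,t)) (munit (k,a)) k t = (0::'a)"
      by (auto intro: mmult_units mmult_units0)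
    thus ?thesis by (simp add: lie_bracket_def msub_def)
  qed
  ultimately show "(k,t) \<in> M" using fM unfolding span_char[OF fM] by (metis (mono_tags, lifting) mem_Collect_eq zero_neq_one neg_equal_0_iff_equal)
next
  have fM: "finite M" using M finite_places finite_subset by blast
  fix k a t assume 1: "(k,a) \<in> M" and 2: "(a,t) \<in> places n"
  have "lie_bracket n (munit (a,t)) (munit (k,a)) \<in> (unit_span M :: 'a mat_fn set)"
    using I munit_in[OF finite_places 2] munit_in[OF fM 1] unfolding is_lie_ideal_def by blast
  moreover have "lie_bracket n (munit (a,t)) (munit (k,a)) k t = (-1::'a)"
  proof -
    have "a \<in> {1..n}" "k \<noteq> a" using 2 1 M by (auto simp: places_def)
    hence "mmult n (munit (k,a)) (munit (a,t)) k t = (1::'a)" "mmult n (munit (a,t)) (munit (k,a)) k t = (0::'a)"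
      by (auto intro: mmult_units mmult_units0)
    thus ?thesis by (simp add: lie_bracket_def msub_def)
  qed
  ultimately show "(k,t) \<in> M" using fM unfolding span_char[OF fM] by (metis (mono_tags, lifting) mem_Collect_eq zero_neq_one neg_equal_0_iff_equal)
qed

lemma greatest_in:
  assumes "finite U" "U \<noteq> {}"
  shows "greatest_pl U \<in> U"
proof -
  define j0 where "j0 = Min (snd ` U)"
  have j0: "j0 \<in> snd ` U" "\<And>x. x \<in> U \<Longrightarrow> j0 \<le> snd x" using assms by (auto simp: j0_def)
  define V where "V = {x\<in>U. snd x = j0}"
  have V: "finite (fst ` V)" "fst ` V \<noteq> {}" using assms j0 by (auto simp: V_def)
  define i0 where "i0 = Max (fst ` V)"
  have i0: "i0 \<in> fst ` V" "\<And>x. x \<in> V \<Longrightarrow> fst x \<le> i0" using V by (auto simp: i0_def)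
  have mem: "(i0, j0) \<in> U" using i0(1) by (auto simp: V_def)
  have gr: "\<forall>\<eta>\<in>U. \<eta> \<noteq> (i0,j0) \<longrightarrow> succ_pl (i0,j0) \<eta>"
  proof (intro ballI impI)
    fix \<eta> assume "\<eta> \<in> U" "\<eta> \<noteq> (i0,j0)"
    moreover have "j0 \<le> snd \<eta>" using j0(2) \<open>\<eta> \<in> U\<close> .
    moreover have "snd \<eta> = j0 \<Longrightarrow> fst \<eta> \<le> i0" using i0(2)[of \<eta>] \<open>\<eta> \<in> U\<close> by (auto simp: V_def)
    ultimately show "succ_pl (i0,j0) \<eta>" by (cases \<eta>) (auto simp: succ_pl_def)
  qed
  have "\<exists>!\<xi>. \<xi> \<in> U \<and> (\<forall>\<eta>\<in>U. \<eta> \<noteq> \<xi> \<longrightarrow> succ_pl \<xi> \<eta>)"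
  proof (rule ex1I[of _ "(i0,j0)"])
    show "(i0, j0) \<in> U \<and> (\<forall>\<eta>\<in>U. \<eta> \<noteq> (i0, j0) \<longrightarrow> succ_pl (i0, j0) \<eta>)" using mem gr by blast
  next
    fix \<xi> assume h: "\<xi> \<in> U \<and> (\<forall>\<eta>\<in>U. \<eta> \<noteq> \<xi> \<longrightarrow> succ_pl \<xi> \<eta>)"
    show "\<xi> = (i0,j0)"
    proof (rule ccontr)
      assume ne: "\<xi> \<noteq> (i0,j0)"
      hence "succ_pl \<xi> (i0,j0)" using h mem by auto
      moreover have "succ_pl (i0,j0) \<xi>" using gr h ne by auto
      ultimately show False by (auto simp: succ_pl_def)
    qed
  qed
  hence "greatest_pl U \<in> U \<and> (\<forall>\<eta>\<in>U. \<eta> \<noteq> greatest_pl U \<longrightarrow> succ_pl (greatest_pl U) \<eta>)"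
    unfolding greatest_pl_def by (rule theI')
  thus ?thesis by blast
qed

lemma step_sub: "diagram_step U \<subseteq> U"
  by (auto simp: diagram_step_def Let_def split: prod.splits)

lemma step_closed:
  assumes fU: "finite U" and UP: "U \<subseteq> places n" and UM: "U \<inter> M = {}"
    and cl: "closed_pl (U \<union> M)" and MP: "M \<subseteq> places n"
    and IL: "\<And>k a t. (k,a) \<in> places n \<Longrightarrow> (a,t) \<in> M \<Longrightarrow> (k,t) \<in> M"
    and IR: "\<And>k a t. (k,a) \<in> M \<Longrightarrow> (a,t) \<in> places n \<Longrightarrow> (k,t) \<in> M"
  shows "closed_pl (diagram_step U \<union> M)"
proof (cases "U = {}")
  case True thus ?thesis using cl by (simp add: diagram_step_def)
next
  case False
  obtain k t where kt: "greatest_pl U = (k,t)" by fastforce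
  have ktU: "(k,t) \<in> U" using greatest_in[OF fU False] kt by simp
  define P where "P = {a. t < a \<and> a < k \<and> (k, a) \<in> U \<and> (a, t) \<in> U}"
  have S: "diagram_step U = U - {(k, t)} - {(k, a) | a. a \<in> P} - {(a, t) | a. a \<in> P}"
    using False kt by (simp add: diagram_step_def P_def)
  have mem: "\<And>x y. (x,y) \<in> diagram_step U \<longleftrightarrow> (x,y) \<in> U \<and> (x,y) \<noteq> (k,t) \<and> \<not> (x = k \<and> y \<in> P) \<and> \<not> (y = t \<and> x \<in> P)"
    unfolding S by blast
  have ktM: "(k,t) \<notin> M" using ktU UM by blast
  show ?thesis unfolding closed_pl_def
  proof (intro allI impI)
    fix p q r assume pq: "(p,q) \<in> diagram_step U \<union> M" and qr: "(q,r) \<in> diagram_step U \<union> M"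
    have pqU: "(p,q) \<in> U \<union> M" and qrU: "(q,r) \<in> U \<union> M" using pq qr step_sub by blast+
    have pqP: "(p,q) \<in> places n" and qrP: "(q,r) \<in> places n" using pqU qrU UP MP by auto
    show "(p,r) \<in> diagram_step U \<union> M"
    proof (cases "(p,q) \<in> M \<or> (q,r) \<in> M")
      case True thus ?thesis using IL IR pqP qrP by blast
    next
      case False
      hence pq': "(p,q) \<in> diagram_step U" and qr': "(q,r) \<in> diagram_step U" using pq qr by auto
      hence pqu: "(p,q) \<in> U" and qru: "(q,r) \<in> U" using step_sub by auto
      have prU: "(p,r) \<in> U \<union> M" using cl pqU qrU by (auto simp: closed_pl_def)
      have lt: "r < q" "q < p" using pqP qrP by (auto simp: places_def)
      show ?thesis
      proof (rule ccontr)
        assume nin: "(p,r) \<notin> diagram_step U \<union> M"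
        hence prU': "(p,r) \<in> U" using prU by auto
        have "(p,r) = (k,t) \<or> (p = k \<and> r \<in> P) \<or> (r = t \<and> p \<in> P)" using nin prU' mem by blast
        thus False
        proof (elim disjE)
          assume "(p,r) = (k,t)"
          hence "q \<in> P" using pqu qru lt by (auto simp: P_def)
          thus False using pq' mem \<open>(p,r) = (k,t)\<close> by auto
        next
          assume h: "p = k \<and> r \<in> P"
          hence rt: "(r,t) \<in> U" "t < r" using P_def by auto
          have "(q,t) \<in> U \<union> M" using cl qru rt(1) by (auto simp: closed_pl_def)
          moreover have "(q,t) \<notin> M"
          proof
            assume "(q,t) \<in> M" hence "(k,t) \<in> M" using IL[of k q t] pqu UP h by auto
            thus False using ktM by simp
          qed
          ultimately have "(q,t) \<in> U" by auto
          hence "q \<in> P" using pqu h rt lt by (auto simp: P_def)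
          thus False using pq' mem h by auto
        next
          assume h: "r = t \<and> p \<in> P"
          hence kp: "(k,p) \<in> U" "p < k" using P_def by auto
          have "(k,q) \<in> U \<union> M" using cl pqu kp(1) by (auto simp: closed_pl_def)
          moreover have "(k,q) \<notin> M"
          proof
            assume "(k,q) \<in> M" hence "(k,t) \<in> M" using IR[of k q t] qru UP h by auto
            thus False using ktM by simp
          qed
          ultimately have "(k,q) \<in> U" by auto
          hence "q \<in> P" using qru h kp lt by (auto simp: P_def)
          thus False using qr' mem h by auto
        qed
      qed
    qed
  qed
qed

lemma Bset_props:
  assumes IL: "\<And>k a t. (k,a) \<in> places n \<Longrightarrow> (a,t) \<in> M \<Longrightarrow> (k,t) \<in> M"
    and IR: "\<And>k a t. (k,a) \<in> M \<Longrightarrow> (a,t) \<in> places n \<Longrightarrow> (k,t) \<in> M"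
    and MP: "M \<subseteq> places n"
  shows "Bset n M i \<subseteq> places n - M \<and> closed_pl (Bset n M i \<union> M)"
proof (induction i)
  case 0
  have "places n - M \<union> M = places n" using MP by auto
  moreover have "closed_pl (places n)" by (auto simp: closed_pl_def places_def)
  ultimately show ?case by (simp add: Bset_def)
next
  case (Suc i)
  have eq: "Bset n M (Suc i) = diagram_step (Bset n M i)" by (simp add: Bset_def)
  have f: "finite (Bset n M i)" using Suc finite_places finite_subset by blast
  have c: "closed_pl (diagram_step (Bset n M i) \<union> M)"
    by (rule step_closed[OF f _ _ _ MP IL IR]) (use Suc in auto)
  show ?case unfolding eq
    using step_sub[of "Bset n M i"] Suc c by blast
qed

lemma bracket_closed:
  assumes fS: "finite S" and cl: "closed_pl S"
    and X: "X \<in> (unit_span S :: 'a::field mat_fn set)" and Y: "Y \<in> unit_span S"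
  shows "lie_bracket n X Y \<in> unit_span S"
proof -
  have X0: "\<And>a b. (a,b) \<notin> S \<Longrightarrow> X a b = 0" and Y0: "\<And>a b. (a,b) \<notin> S \<Longrightarrow> Y a b = 0"
    using X Y fS by (auto simp: span_char)
  have m: "\<And>Z W a b. (\<And>a b. (a,b) \<notin> S \<Longrightarrow> Z a b = 0) \<Longrightarrow> (\<And>a b. (a,b) \<notin> S \<Longrightarrow> W a b = (0::'a))
     \<Longrightarrow> (a,b) \<notin> S \<Longrightarrow> mmult n Z W a b = 0"
  proof -
    fix Z W :: "'a mat_fn" and a b
    assume Z: "\<And>a b. (a,b) \<notin> S \<Longrightarrow> Z a b = 0" and W: "\<And>a b. (a,b) \<notin> S \<Longrightarrow> W a b = 0"
      and ab: "(a,b) \<notin> S"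
    show "mmult n Z W a b = 0" unfolding mmult_def
    proof (rule sum.neutral, rule ballI)
      fix c
      show "Z a c * W c b = 0"
      proof (cases "(a,c) \<in> S \<and> (c,b) \<in> S")
        case True thus ?thesis using cl ab by (auto simp: closed_pl_def)
      next
        case False thus ?thesis using Z W by auto
      qed
    qed
  qed
  show ?thesis using fS m[of X Y] m[of Y X] X0 Y0
    by (auto simp: span_char lie_bracket_def msub_def)
qed

theorem lemma1:
  fixes n :: nat and M :: "(nat \<times> nat) set" and i :: nat
  assumes "n \<ge> 2"
    and "M \<subseteq> places n"
    and "is_lie_ideal n (unit_span M :: 'a::field_char_0 mat_fn set) (unit_span (places n))"
    and "i \<le> num_steps n M"
  shows "is_lie_subalgebra n (unit_span (Aset n M i) :: 'a mat_fn set) (unit_span (places n))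
       \<and> (unit_span M :: 'a mat_fn set) \<subseteq> unit_span (Aset n M i)"
proof -
  note IP = ideal_props[OF assms(2) assms(3)]
  have B: "Bset n M i \<subseteq> places n - M \<and> closed_pl (Bset n M i \<union> M)"
    by (rule Bset_props[where n=n and M=M]) (use IP assms(2) in auto)
  have sub: "Aset n M i \<subseteq> places n" using B assms(2) by (auto simp: Aset_def)
  have fA: "finite (Aset n M i)" using sub finite_places finite_subset by blast
  have fM: "finite M" using assms(2) finite_places finite_subset by blast
  have cl: "closed_pl (Aset n M i)" using B by (simp add: Aset_def)
  have "is_lie_subalgebra n (unit_span (Aset n M i) :: 'a mat_fn set) (unit_span (places n))"
    unfolding is_lie_subalgebra_def
  proof (intro conjI)
    show "(unit_span (Aset n M i) :: 'a mat_fn set) \<subseteq> unit_span (places n)"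
      using sub fA finite_places by (auto simp: span_char)
    show "\<forall>X\<in>unit_span (Aset n M i). \<forall>Y\<in>unit_span (Aset n M i). lie_bracket n X Y \<in> (unit_span (Aset n M i) :: 'a mat_fn set)"
      using bracket_closed[OF fA cl] by blast
  qed (use fA in \<open>auto simp: span_char madd_def msmult_def\<close>)
  moreover have "(unit_span M :: 'a mat_fn set) \<subseteq> unit_span (Aset n M i)"
    using fM fA by (auto simp: span_char Aset_def)
  ultimately show ?thesis by blast
qed

end
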